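(* Consider the disclosure model described in the context, and let $d_0$ be the uninformative disclosure policy $d_0(e)=\bar e$ for all $e\in E$. Then $d_0\in\mathcal{D}$, and for every $d\in\mathcal{D}$ we have $\Gamma(d_0)\ge\Gamma(d)$ and $\Pi(d_0)\le\Pi(d)$. That is, $d_0$ induces the highest expected emission and the lowest expected profit among all disclosure policies.
   Context: Emissions lie in $E=[0,\bar e]$ with $\bar e>0$. The firm's type $\theta\in\Theta=[\underline\theta,\bar\theta]$ is private information with a continuous density $f=F'$ on $\Theta$. The firm's profit is $\tilde\pi(\theta,e,\tilde e)$ with actual emission $e$ and market-perceived emission $\tilde e$; it is strictly increasing in $e$ and strictly decreasing in $\tilde e$. Standing assumptions: $\tilde\pi$ is continuous on $\Theta\times E\times E$ and $C^2$ on its interior; $\pi(\theta,e):=\tilde\pi(\theta,e,e)$ is strictly concave in $e$; and $\pi(\theta,0)<\pi(\theta,\bar e)$ for all $\theta$. A disclosure policy is a function $d:E\to E$ (a partition of $E$ into level sets). An emission $e$ is belief-compatible under $d$ if $e\ge e'$ whenever $d(e')=d(e)$; $\tilde E_d$ is the set of such levels. The type-$\theta$ firm chooses $e\in\tilde E_d$ maximizing $\pi(\theta,e)$. $\mathcal{D}$ is the set of policies for which the maximum is attained for every type. For $d\in\mathcal{D}$, $\pi_d(\theta)=\max_{e\in\tilde E_d}\pi(\theta,e)$, and $\gamma_d(\theta)$ is the lowest maximizer (the equilibrium emission). Further, $\Pi(d)=\int_\Theta\pi_d\,dF$ and $\Gamma(d)=\int_\Theta\gamma_d\,dF$. *)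

theory Defs
  imports "HOL-Analysis.Analysis"
begin

definition strictly_concave_on :: "real set \<Rightarrow> (real \<Rightarrow> real) \<Rightarrow> bool" where
  "strictly_concave_on S g \<longleftrightarrow> convex S \<and>
     (\<forall>x\<in>S. \<forall>y\<in>S. x \<noteq> y \<longrightarrow> (\<forall>t::real. 0 < t \<and> t < 1 \<longrightarrow>
        g ((1 - t) * x + t * y) > (1 - t) * g x + t * g y))"

definition C2_on :: "'a::euclidean_space set \<Rightarrow> ('a \<Rightarrow> real) \<Rightarrow> bool" where
  "C2_on S g \<longleftrightarrow> (\<exists>D :: 'a \<Rightarrow> ('a \<Rightarrow>\<^sub>L real). \<exists>D2 :: 'a \<Rightarrow> ('a \<Rightarrow>\<^sub>L ('a \<Rightarrow>\<^sub>L real)).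
      (\<forall>x\<in>S. (g has_derivative blinfun_apply (D x)) (at x)) \<and>
      (\<forall>x\<in>S. (D has_derivative blinfun_apply (D2 x)) (at x)) \<and>
      continuous_on S D2)"

definition emis :: "real \<Rightarrow> real set" where
  "emis ebar = {0..ebar}"

definition belief_compatible :: "real \<Rightarrow> (real \<Rightarrow> real) \<Rightarrow> real set" where
  "belief_compatible ebar d =
     {e \<in> emis ebar. \<forall>e'\<in>emis ebar. d e' = d e \<longrightarrow> e' \<le> e}"

text \<open>The admissible policies \<D>: maps E \<rightarrow> E such that each type attains its maximum
  of prof(theta,e) over the belief-compatible levels. prof theta e = prof~ theta e e.\<close>
definition policies :: "real \<Rightarrow> real set \<Rightarrow> (real \<Rightarrow> real \<Rightarrow> real) \<Rightarrow> (real \<Rightarrow> real) set" where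
  "policies ebar Theta prof = {d. (\<forall>e\<in>emis ebar. d e \<in> emis ebar) \<and>
     (\<forall>\<theta>\<in>Theta. \<exists>e\<in>belief_compatible ebar d. \<forall>e'\<in>belief_compatible ebar d. prof \<theta> e' \<le> prof \<theta> e)}"

text \<open>pi_d(theta): the maximal profit (attained for d in \<D>).\<close>
definition profit_d :: "real \<Rightarrow> (real \<Rightarrow> real \<Rightarrow> real) \<Rightarrow> (real \<Rightarrow> real) \<Rightarrow> real \<Rightarrow> real" where
  "profit_d ebar prof d \<theta> = (SUP e\<in>belief_compatible ebar d. prof \<theta> e)"

definition emission_d :: "real \<Rightarrow> (real \<Rightarrow> real \<Rightarrow> real) \<Rightarrow> (real \<Rightarrow> real) \<Rightarrow> real \<Rightarrow> real" where
  "emission_d ebar prof d \<theta> = (LEAST e. e \<in> belief_compatible ebar d \<and>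
       (\<forall>e'\<in>belief_compatible ebar d. prof \<theta> e' \<le> prof \<theta> e))"

definition expect :: "real \<Rightarrow> real \<Rightarrow> (real \<Rightarrow> real) \<Rightarrow> (real \<Rightarrow> real) \<Rightarrow> real" where
  "expect thl thh f g = (LINT \<theta>:{thl..thh}|lborel. g \<theta> * f \<theta>)"

definition exp_profit where
  "exp_profit thl thh f ebar prof d = expect thl thh f (profit_d ebar prof d)"

definition exp_emission where
  "exp_emission thl thh f ebar prof d = expect thl thh f (emission_d ebar prof d)"

end

theory Submission
  imports Defs
begin

lemma sc_mid:
  assumes sc: "strictly_concave_on {0..ebar} g" and xy: "x < y" and yz: "y < z"
    and x: "x \<in> {0..ebar}" and z: "z \<in> {0..ebar}"
  shows "g y > min (g x) (g z)"
proof -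
  define t where "t = (y - x) / (z - x)"
  have t0: "0 < t" and t1: "t < 1" using xy yz by (auto simp: t_def field_simps)
  have zx: "z - x \<noteq> 0" using xy yz by simp
  have "(1 - t) * x + t * z = x + t * (z - x)" by (simp add: algebra_simps)
  also have "t * (z - x) = y - x" using zx by (simp add: t_def)
  finally have ty: "(1 - t) * x + t * z = y" by simp
  have "x \<noteq> z" using xy yz by simp
  then have "g ((1 - t) * x + t * z) > (1 - t) * g x + t * g z"
    using sc x z t0 t1 unfolding strictly_concave_on_def by blast
  moreover have "(1 - t) * g x + t * g z \<ge> (1 - t) * min (g x) (g z) + t * min (g x) (g z)"
    using t0 t1 by (intro add_mono mult_left_mono) auto
  ultimately show ?thesis using ty by (simp add: algebra_simps)
qed

lemma sc_three:
  assumes sc: "strictly_concave_on {0..ebar} g"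
    and "a \<in> {0..ebar}" "b \<in> {0..ebar}" "c \<in> {0..ebar}"
    and "a \<noteq> b" "b \<noteq> c" "a \<noteq> c"
    and "g a = M" "g b = M" "g c = M"
  shows False
proof -
  have "\<And>x y z. x < y \<Longrightarrow> y < z \<Longrightarrow> x \<in> {a,b,c} \<Longrightarrow> y \<in> {a,b,c} \<Longrightarrow> z \<in> {a,b,c} \<Longrightarrow> False"
  proof -
    fix x y z assume "x < y" "y < z" "x \<in> {a,b,c}" "y \<in> {a,b,c}" "z \<in> {a,b,c}"
    then have "g y > min (g x) (g z)" using sc_mid[OF sc, of x y z] assms(2-4) by auto
    then show False using \<open>x \<in> {a,b,c}\<close> \<open>y \<in> {a,b,c}\<close> \<open>z \<in> {a,b,c}\<close> assms(8-10) by auto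
  qed
  then show False using assms(5-7)
    by (metis insertCI linorder_neqE_linordered_idom)
qed

theorem proposition2:
  fixes pit :: "real \<Rightarrow> real \<Rightarrow> real \<Rightarrow> real"
    and thl thh ebar :: real
    and f :: "real \<Rightarrow> real"
  defines "prof \<equiv> (\<lambda>\<theta> e. pit \<theta> e e)"
    and "d0 \<equiv> (\<lambda>e::real. ebar)"
  assumes ebar_pos: "ebar > 0"
    and Theta: "thl < thh"
    and f_cont: "continuous_on {thl..thh} f"
    and f_nonneg: "\<forall>\<theta>\<in>{thl..thh}. f \<theta> \<ge> 0"
    and f_density: "(LINT \<theta>:{thl..thh}|lborel. f \<theta>) = 1"
    and incr: "\<forall>\<theta>\<in>{thl..thh}. \<forall>et\<in>{0..ebar}. \<forall>e1\<in>{0..ebar}. \<forall>e2\<in>{0..ebar}.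
                 e1 < e2 \<longrightarrow> pit \<theta> e1 et < pit \<theta> e2 et"
    and decr: "\<forall>\<theta>\<in>{thl..thh}. \<forall>e\<in>{0..ebar}. \<forall>e1\<in>{0..ebar}. \<forall>e2\<in>{0..ebar}.
                 e1 < e2 \<longrightarrow> pit \<theta> e e2 < pit \<theta> e e1"
    and cont: "continuous_on ({thl..thh} \<times> {0..ebar} \<times> {0..ebar}) (\<lambda>(\<theta>, e, et). pit \<theta> e et)"
    and C2: "C2_on (interior ({thl..thh} \<times> {0..ebar} \<times> {0..ebar})) (\<lambda>(\<theta>, e, et). pit \<theta> e et)"
    and concave: "\<forall>\<theta>\<in>{thl..thh}. strictly_concave_on {0..ebar} (prof \<theta>)"
    and top: "\<forall>\<theta>\<in>{thl..thh}. prof \<theta> 0 < prof \<theta> ebar"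
  shows "d0 \<in> policies ebar {thl..thh} prof \<and>
         (\<forall>d\<in>policies ebar {thl..thh} prof.
            exp_emission thl thh f ebar prof d0 \<ge> exp_emission thl thh f ebar prof d \<and>
            exp_profit thl thh f ebar prof d0 \<le> exp_profit thl thh f ebar prof d)"
proof -
  let ?T = "{thl..thh}"
  have bc_top: "\<And>d. ebar \<in> belief_compatible ebar d"
    using ebar_pos by (auto simp: belief_compatible_def emis_def)
  have bc_sub: "\<And>d. belief_compatible ebar d \<subseteq> {0..ebar}"
    by (auto simp: belief_compatible_def emis_def)
  have bc0: "belief_compatible ebar d0 = {ebar}"
    proof
    show "belief_compatible ebar d0 \<subseteq> {ebar}"
    proof
      fix x assume "x \<in> belief_compatible ebar d0"
      then have "x \<le> ebar" and h: "\<forall>e'\<in>{0..ebar}. e' \<le> x"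
        by (simp_all add: belief_compatible_def emis_def d0_def)
      moreover have "ebar \<le> x" using h ebar_pos by simp
      ultimately show "x \<in> {ebar}" by simp
    qed
  qed (use ebar_pos in \<open>auto simp: belief_compatible_def emis_def d0_def\<close>)
  have d0P: "d0 \<in> policies ebar ?T prof"
    unfolding policies_def using bc0 ebar_pos by (auto simp: d0_def emis_def)
  have em0: "\<And>th. emission_d ebar prof d0 th = ebar"
    unfolding emission_d_def bc0 by (rule Least_equality) auto
  have pr0: "\<And>th. profit_d ebar prof d0 th = prof th ebar"
    unfolding profit_d_def bc0 by simp
  have E0: "exp_emission thl thh f ebar prof d0 = ebar"
    by (simp add: exp_emission_def expect_def em0 f_density)
  have gcont: "continuous_on (?T \<times> {0..ebar}) (\<lambda>(th,e). prof th e)"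
  proof -
    have "continuous_on (?T \<times> {0..ebar}) ((\<lambda>(\<theta>, e, et). pit \<theta> e et) o (\<lambda>(th,e). (th,e,e)))"
    proof (rule continuous_on_compose)
      show "continuous_on (?T \<times> {0..ebar}) (\<lambda>(th,e). (th,e,e))"
        by (auto intro!: continuous_intros simp: split_def)
      show "continuous_on ((\<lambda>(th,e). (th,e,e)) ` (?T \<times> {0..ebar})) (\<lambda>(\<theta>, e, et). pit \<theta> e et)"
        by (rule continuous_on_subset[OF cont]) auto
    qed
    then show ?thesis by (simp add: prof_def o_def split_def)
  qed
  have gunif: "uniformly_continuous_on (?T \<times> {0..ebar}) (\<lambda>(th,e). prof th e)"
    by (rule compact_uniformly_continuous[OF gcont]) (intro compact_Times compact_Icc)
  have maxex: "\<And>d th. d \<in> policies ebar ?T prof \<Longrightarrow> th \<in> ?T \<Longrightarrow>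
      \<exists>e\<in>belief_compatible ebar d. \<forall>e'\<in>belief_compatible ebar d. prof th e' \<le> prof th e"
    unfolding policies_def by blast
  have bdd: "\<And>d th. d \<in> policies ebar ?T prof \<Longrightarrow> th \<in> ?T \<Longrightarrow>
      bdd_above (prof th ` belief_compatible ebar d)"
  proof -
    fix d th assume "d \<in> policies ebar ?T prof" "th \<in> ?T"
    then obtain e where "\<forall>e'\<in>belief_compatible ebar d. prof th e' \<le> prof th e"
      using maxex by blast
    then show "bdd_above (prof th ` belief_compatible ebar d)" by (auto intro: bdd_aboveI2)
  qed
  have pd_cont: "\<And>d. d \<in> policies ebar ?T prof \<Longrightarrow> continuous_on ?T (profit_d ebar prof d)"
  proof -
    fix d assume dP: "d \<in> policies ebar ?T prof"
    let ?B = "belief_compatible ebar d"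
    have Bne: "?B \<noteq> {}" using bc_top by blast
    show "continuous_on ?T (profit_d ebar prof d)"
      unfolding continuous_on_iff
    proof (intro ballI allI impI)
      fix x eps :: real assume x: "x \<in> ?T" and eps: "0 < eps"
      obtain del where del: "del > 0" and hd: "\<forall>p\<in>?T \<times> {0..ebar}. \<forall>p'\<in>?T \<times> {0..ebar}.
          dist p' p < del \<longrightarrow> dist ((\<lambda>(th,e). prof th e) p') ((\<lambda>(th,e). prof th e) p) < eps/2"
        using gunif eps unfolding uniformly_continuous_on_def
        by (metis half_gt_zero)
      show "\<exists>del>0. \<forall>x'\<in>?T. dist x' x < del \<longrightarrow> dist (profit_d ebar prof d x') (profit_d ebar prof d x) < eps"
      proof (intro exI conjI ballI impI)
        show "del > 0" by (rule del)
        fix x' assume x': "x' \<in> ?T" and dx: "dist x' x < del"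
        have close: "\<bar>prof x' e - prof x e\<bar> < eps/2" if "e \<in> ?B" for e
        proof -
          have e: "e \<in> {0..ebar}" using that bc_sub by blast
          have "dist (x', e) (x, e) < del" using dx by (simp add: dist_Pair_Pair)
          then show ?thesis using hd x x' e by (force simp: dist_real_def)
        qed
        have a: "profit_d ebar prof d x' \<le> profit_d ebar prof d x + eps/2"
          unfolding profit_d_def
        proof (rule cSUP_least[OF Bne])
          fix e assume e: "e \<in> ?B"
          have "prof x e \<le> (SUP e\<in>?B. prof x e)" by (rule cSUP_upper[OF e bdd[OF dP x]])
          then show "prof x' e \<le> (SUP e\<in>?B. prof x e) + eps/2" using close[OF e] by linarith
        qed
        have b: "profit_d ebar prof d x \<le> profit_d ebar prof d x' + eps/2"
          unfolding profit_d_def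
        proof (rule cSUP_least[OF Bne])
          fix e assume e: "e \<in> ?B"
          have "prof x' e \<le> (SUP e\<in>?B. prof x' e)" by (rule cSUP_upper[OF e bdd[OF dP x']])
          then show "prof x e \<le> (SUP e\<in>?B. prof x' e) + eps/2" using close[OF e] by linarith
        qed
        show "dist (profit_d ebar prof d x') (profit_d ebar prof d x) < eps"
          using a b eps by (simp add: dist_real_def abs_le_iff)
      qed
    qed
  qed
  have pd_int: "\<And>d. d \<in> policies ebar ?T prof \<Longrightarrow>
      set_integrable lborel ?T (\<lambda>th. profit_d ebar prof d th * f th)"
    by (rule borel_integrable_atLeastAtMost') (intro continuous_on_mult pd_cont f_cont)
  have fint: "set_integrable lborel ?T (\<lambda>th. ebar * f th)"
    by (rule borel_integrable_atLeastAtMost') (intro continuous_on_mult continuous_on_const f_cont)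
  show ?thesis
  proof (intro conjI ballI d0P)
    fix d assume dP: "d \<in> policies ebar ?T prof"
    let ?B = "belief_compatible ebar d"
    have em_le: "emission_d ebar prof d th \<le> ebar" if th: "th \<in> ?T" for th
    proof -
      define P where "P = (\<lambda>e. e \<in> ?B \<and> (\<forall>e'\<in>?B. prof th e' \<le> prof th e))"
      obtain e0 where e0: "P e0" using maxex[OF dP th] unfolding P_def by blast
      have eqv: "P x \<Longrightarrow> P y \<Longrightarrow> prof th x = prof th y" for x y
        unfolding P_def by (meson order_antisym)
      have Pin: "P x \<Longrightarrow> x \<in> {0..ebar}" for x unfolding P_def using bc_sub by blast
      have sc: "strictly_concave_on {0..ebar} (prof th)" using concave th by blast
      have fin: "finite {e. P e}"
      proof (cases "\<exists>e1. P e1 \<and> e1 \<noteq> e0")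
        case True
        then obtain e1 where e1: "P e1" "e1 \<noteq> e0" by blast
        have "{e. P e} \<subseteq> {e0, e1}"
        proof
          fix e assume "e \<in> {e. P e}"
          then have Pe: "P e" by simp
          show "e \<in> {e0, e1}"
          proof (rule ccontr)
            assume "e \<notin> {e0, e1}"
            then have n1: "e1 \<noteq> e" and n2: "e0 \<noteq> e" by auto
            show False
              by (rule sc_three[OF sc Pin[OF e0] Pin[OF e1(1)] Pin[OF Pe] e1(2)[symmetric] n1 n2 refl
                eqv[OF e0 e1(1), symmetric] eqv[OF e0 Pe, symmetric]])
          qed
        qed
        then show ?thesis by (rule finite_subset) simp
      next
        case False
        then have "{e. P e} \<subseteq> {e0}" by auto
        then show ?thesis by (rule finite_subset) simp
      qed
      define m where "m = Min {e. P e}"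
      have mP: "P m" unfolding m_def using Min_in[OF fin] e0 by auto
      have mle: "\<And>y. P y \<Longrightarrow> m \<le> y" unfolding m_def using Min_le[OF fin] by auto
      have "P (Least P)" by (rule LeastI2_order[of P m, OF mP mle])
      then have "Least P \<in> {0..ebar}" by (rule Pin)
      moreover have "emission_d ebar prof d th = Least P"
        unfolding emission_d_def P_def by simp
      ultimately show ?thesis by simp
    qed
    show "exp_emission thl thh f ebar prof d \<le> exp_emission thl thh f ebar prof d0"
    proof (cases "set_integrable lborel ?T (\<lambda>th. emission_d ebar prof d th * f th)")
      case True
      have "exp_emission thl thh f ebar prof d \<le> (LINT th:?T|lborel. ebar * f th)"
        unfolding exp_emission_def expect_def
        by (rule set_integral_mono[OF True fint])
          (use em_le f_nonneg in \<open>auto intro: mult_right_mono\<close>)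
      also have "\<dots> = ebar" by (simp add: f_density)
      finally show ?thesis using E0 by simp
    next
      case False
      then have "exp_emission thl thh f ebar prof d = 0"
        unfolding exp_emission_def expect_def set_lebesgue_integral_def set_integrable_def
        by (simp add: not_integrable_integral_eq)
      then show ?thesis using E0 ebar_pos by simp
    qed
    show "exp_profit thl thh f ebar prof d0 \<le> exp_profit thl thh f ebar prof d"
      unfolding exp_profit_def expect_def
      by (rule set_integral_mono[OF pd_int[OF d0P] pd_int[OF dP]])
        (use pr0 f_nonneg bc_top cSUP_upper[OF bc_top bdd[OF dP]] in \<open>auto intro!: mult_right_mono simp: profit_d_def\<close>)
  qed
qed

end
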